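(* Let $I$ be the tridendriform ideal of $\mathcal{A}$ generated by $\{x\cdot y:x,y\in\mathcal A^+\}$, let $\overline{\Delta}$ be the coproduct induced by $\Delta$ on $\mathcal{A}/I$ and write $\bar x$ for the class of $x$. Define recursively, for every planar binary tree $t$, an element $\Delta_{LR}(t)\in(\mathcal A/I)\otimes(\mathcal A/I)$ of the form $\sum_{(X,s)}X\otimes\bar s$ (finite sum, $X\in\mathcal A/I$, $s$ binary trees) by $\Delta_{LR}(|)=\bar|\otimes\bar|$ and, for $t=t_1\vee t_2$ with $\Delta_{LR}(t_1)=\sum_{(X,s)}X\otimes\bar s$ and $\Delta_{LR}(t_2)=\sum_{(Z,r)}Z\otimes\bar r$, $$\Delta_{LR}(t)=\sum_{(X,s),(Z,r)}(X*Z)\otimes\overline{s\vee r}+\bar t\otimes\bar|.$$ Then $\overline{\Delta}(\bar t)=\Delta_{LR}(t)$ for every planar binary tree $t$ (this is the Loday–Ronco coproduct).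
   Context: Trees: planar rooted trees in which every internal vertex has at least two children; the root vertex hangs from a trunk edge; leaves are edges without upper vertex; $|$ is the one-leaf tree; binary trees are those in which every internal vertex has exactly two children. $\mathcal A$ is the $\mathbb K$-span of all trees, $\mathcal A^+$ that of trees $\neq|$. Products: $x_0\vee\cdots\vee x_k$ ($k\ge1$) grafts trees left to right on a new root; for $x=x^{(0)}\vee\cdots\vee x^{(k)}$, $y=y^{(0)}\vee\cdots\vee y^{(l)}$: $x\prec y=x^{(0)}\vee\cdots\vee x^{(k-1)}\vee(x^{(k)}*y)$, $x\cdot y=x^{(0)}\vee\cdots\vee x^{(k-1)}\vee(x^{(k)}*y^{(0)})\vee y^{(1)}\vee\cdots\vee y^{(l)}$, $x\succ y=(x*y^{(0)})\vee y^{(1)}\vee\cdots\vee y^{(l)}$, $*=\prec+\cdot+\succ$, $|*z=z*|=z$; for $a\in\mathcal A^+$: $|\prec a=0$, $a\prec|=a$, $|\succ a=a$, $a\succ|=0$, $|\cdot a=a\cdot|=0$. A tridendriform ideal is a subspace $J$ with $x\ltimes y\in J$ whenever $x\in J$ or $y\in J$; $*$ descends to $\mathcal A/I$. Coproduct: $\Delta(|)=|\otimes|$, $\Delta(t)=\sum_c G^c(t)\otimes P^c(t)$ over admissible cuts of $t$ (internal edges join two internal vertices; a cut is a nonempty set of internal edges, plus the empty and total (below the root) cuts; admissible if every root-to-leaf path meets at most one chosen edge; $P^c(t)$ the component containing the root, $G^c(t)$ the $*$-product of the cut-off trees from left to right; empty cut: $P^c=t,G^c=|$; total cut: $P^c=|,G^c=t$).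 One has $\Delta(I)\subseteq I\otimes\mathcal A+\mathcal A\otimes I$, so $\Delta$ induces $\overline\Delta:\mathcal A/I\to(\mathcal A/I)\otimes(\mathcal A/I)$. *)

theory Defs
  imports Main "HOL-Library.Poly_Mapping" "HOL-Library.Sublist"
begin

text \<open>A tree is either the one-leaf tree (Leaf, written | in the paper) or a root vertex
  (hanging from the trunk) carrying the ordered list of its subtrees, grafted left to right.\<close>

datatype tree = Leaf | Node "tree list"

fun wf_tree :: "tree \<Rightarrow> bool" where
  "wf_tree Leaf = True"
| "wf_tree (Node ts) = (2 \<le> length ts \<and> list_all wf_tree ts)"

fun binary_tree :: "tree \<Rightarrow> bool" where
  "binary_tree Leaf = True"
| "binary_tree (Node ts) = (length ts = 2 \<and> list_all binary_tree ts)"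

lemma size_mem_Node: "s \<in> set ts \<Longrightarrow> size s < size (Node ts)"
  by (induct ts) auto

lemma size_mem_list: "(s::tree) \<in> set ts \<Longrightarrow> size s < Suc (size_list size ts)"
  using size_mem_Node[of s ts] by simp

lemma size_last_Node: "(ts::tree list) \<noteq> [] \<Longrightarrow> size (last ts) < Suc (size_list size ts)"
  by (rule size_mem_list) simp

lemma size_hd_Node: "(ts::tree list) \<noteq> [] \<Longrightarrow> size (hd ts) < Suc (size_list size ts)"
  by (rule size_mem_list) simp

text \<open>An element of the K-span of trees is a finitely supported function tree \<Rightarrow> K;
  the elements of the span of trees in the sense of the paper (the space A) are those
  supported on well-formed trees.  The tensor product of the span with itself is
  identified with the span of pairs of trees.\<close>

definition inA :: "(tree \<Rightarrow>\<^sub>0 'k::zero) \<Rightarrow> bool" where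
  "inA x \<longleftrightarrow> (\<forall>t\<in>Poly_Mapping.keys x. wf_tree t)"

definition inAplus :: "(tree \<Rightarrow>\<^sub>0 'k::zero) \<Rightarrow> bool" where
  "inAplus x \<longleftrightarrow> (\<forall>t\<in>Poly_Mapping.keys x. wf_tree t \<and> t \<noteq> Leaf)"

definition vec :: "tree \<Rightarrow> (tree \<Rightarrow>\<^sub>0 'k::{zero,one})" where
  "vec t = Poly_Mapping.single t 1"

definition scale :: "'k::semiring_0 \<Rightarrow> ('a \<Rightarrow>\<^sub>0 'k) \<Rightarrow> ('a \<Rightarrow>\<^sub>0 'k)" where
  "scale c v = Poly_Mapping.map ((*) c) v"

definition bilin :: "(tree \<Rightarrow> tree \<Rightarrow> ('a \<Rightarrow>\<^sub>0 'k::comm_semiring_1))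
    \<Rightarrow> (tree \<Rightarrow>\<^sub>0 'k) \<Rightarrow> (tree \<Rightarrow>\<^sub>0 'k) \<Rightarrow> ('a \<Rightarrow>\<^sub>0 'k)" where
  "bilin f x y = (\<Sum>s\<in>Poly_Mapping.keys x. \<Sum>r\<in>Poly_Mapping.keys y. scale (Poly_Mapping.lookup x s * Poly_Mapping.lookup y r) (f s r))"

definition tens :: "(tree \<Rightarrow>\<^sub>0 'k::comm_semiring_1) \<Rightarrow> (tree \<Rightarrow>\<^sub>0 'k) \<Rightarrow> (tree \<times> tree \<Rightarrow>\<^sub>0 'k)" where
  "tens x y = (\<Sum>s\<in>Poly_Mapping.keys x. \<Sum>r\<in>Poly_Mapping.keys y. Poly_Mapping.single (s, r) (Poly_Mapping.lookup x s * Poly_Mapping.lookup y r))"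

definition graftmid :: "tree list \<Rightarrow> (tree \<Rightarrow>\<^sub>0 'k::comm_semiring_1) \<Rightarrow> tree list \<Rightarrow> (tree \<Rightarrow>\<^sub>0 'k)" where
  "graftmid pre v post = (\<Sum>c\<in>Poly_Mapping.keys v. Poly_Mapping.single (Node (pre @ c # post)) (Poly_Mapping.lookup v c))"

text \<open>The total product * on basis trees, defined by  * = \<prec> + \<cdot> + \<succ>  for trees different from |,
  and with | as unit.  For x = x0 \<or> ... \<or> xk, y = y0 \<or> ... \<or> yl:
   x \<prec> y = x0 \<or> ... \<or> x(k-1) \<or> (xk * y),
   x \<cdot> y = x0 \<or> ... \<or> x(k-1) \<or> (xk * y0) \<or> y1 \<or> ... \<or> yl,
   x \<succ> y = (x * y0) \<or> y1 \<or> ... \<or> yl.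
  (The branch for Node [] never occurs for well-formed trees.)\<close>

function star_t :: "tree \<Rightarrow> tree \<Rightarrow> (tree \<Rightarrow>\<^sub>0 'k::comm_semiring_1)" where
  "star_t Leaf y = vec y"
| "star_t (Node xs) Leaf = vec (Node xs)"
| "star_t (Node xs) (Node ys) =
     (if xs = [] \<or> ys = [] then 0 else
        graftmid (butlast xs) (star_t (last xs) (Node ys)) []
      + graftmid (butlast xs) (star_t (last xs) (hd ys)) (tl ys)
      + graftmid [] (star_t (Node xs) (hd ys)) (tl ys))"
  by pat_completeness auto
termination
proof (relation "measure (\<lambda>(x, y). size x + size y)", goal_cases)
  case 1 show ?case by simp
next
  case (2 xs ys) thus ?case using size_last_Node[of xs] by simp
next
  case (3 xs ys) thus ?case using size_last_Node[of xs] size_hd_Node[of ys] by simp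
next
  case (4 xs ys) thus ?case using size_hd_Node[of ys] by simp
qed

text \<open>The three partial products on basis trees, with the conventions
  | \<prec> a = 0, a \<prec> | = a, | \<succ> a = a, a \<succ> | = 0, | \<cdot> a = a \<cdot> | = 0 for a \<noteq> |
  (for a = | both sides, any convention compatible with |*| = | is irrelevant for the theorem;
  we take | \<prec> | = | \<cdot> | = | \<succ> | = 0).\<close>

fun prec_t :: "tree \<Rightarrow> tree \<Rightarrow> (tree \<Rightarrow>\<^sub>0 'k::comm_semiring_1)" where
  "prec_t Leaf y = 0"
| "prec_t (Node xs) y = (if xs = [] then 0 else graftmid (butlast xs) (star_t (last xs) y) [])"

fun dot_t :: "tree \<Rightarrow> tree \<Rightarrow> (tree \<Rightarrow>\<^sub>0 'k::comm_semiring_1)" where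
  "dot_t (Node xs) (Node ys) =
     (if xs = [] \<or> ys = [] then 0 else graftmid (butlast xs) (star_t (last xs) (hd ys)) (tl ys))"
| "dot_t _ _ = 0"

fun succ_t :: "tree \<Rightarrow> tree \<Rightarrow> (tree \<Rightarrow>\<^sub>0 'k::comm_semiring_1)" where
  "succ_t x Leaf = 0"
| "succ_t x (Node ys) = (if ys = [] then 0 else graftmid [] (star_t x (hd ys)) (tl ys))"

definition Star :: "(tree \<Rightarrow>\<^sub>0 'k::comm_semiring_1) \<Rightarrow> (tree \<Rightarrow>\<^sub>0 'k) \<Rightarrow> (tree \<Rightarrow>\<^sub>0 'k)" where
  "Star = bilin star_t"

definition Prec :: "(tree \<Rightarrow>\<^sub>0 'k::comm_semiring_1) \<Rightarrow> (tree \<Rightarrow>\<^sub>0 'k) \<Rightarrow> (tree \<Rightarrow>\<^sub>0 'k)" where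
  "Prec = bilin prec_t"

definition Dot :: "(tree \<Rightarrow>\<^sub>0 'k::comm_semiring_1) \<Rightarrow> (tree \<Rightarrow>\<^sub>0 'k) \<Rightarrow> (tree \<Rightarrow>\<^sub>0 'k)" where
  "Dot = bilin dot_t"

definition Succ :: "(tree \<Rightarrow>\<^sub>0 'k::comm_semiring_1) \<Rightarrow> (tree \<Rightarrow>\<^sub>0 'k) \<Rightarrow> (tree \<Rightarrow>\<^sub>0 'k)" where
  "Succ = bilin succ_t"

inductive_set ideal_I :: "(tree \<Rightarrow>\<^sub>0 'k::field) set" where
  gen: "inAplus x \<Longrightarrow> inAplus y \<Longrightarrow> Dot x y \<in> ideal_I"
| zero: "0 \<in> ideal_I"
| add: "a \<in> ideal_I \<Longrightarrow> b \<in> ideal_I \<Longrightarrow> a + b \<in> ideal_I"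
| smult: "a \<in> ideal_I \<Longrightarrow> scale c a \<in> ideal_I"
| prec_l: "a \<in> ideal_I \<Longrightarrow> inA y \<Longrightarrow> Prec a y \<in> ideal_I"
| dot_l: "a \<in> ideal_I \<Longrightarrow> inA y \<Longrightarrow> Dot a y \<in> ideal_I"
| succ_l: "a \<in> ideal_I \<Longrightarrow> inA y \<Longrightarrow> Succ a y \<in> ideal_I"
| prec_r: "a \<in> ideal_I \<Longrightarrow> inA y \<Longrightarrow> Prec y a \<in> ideal_I"
| dot_r: "a \<in> ideal_I \<Longrightarrow> inA y \<Longrightarrow> Dot y a \<in> ideal_I"
| succ_r: "a \<in> ideal_I \<Longrightarrow> inA y \<Longrightarrow> Succ y a \<in> ideal_I"

text \<open>I \<otimes> A + A \<otimes> I, the kernel of the projection A \<otimes> A \<rightarrow> (A/I) \<otimes> (A/I).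
  Two elements of A \<otimes> A have the same image in (A/I) \<otimes> (A/I) iff their difference lies here.\<close>

inductive_set tensor_ideal :: "(tree \<times> tree \<Rightarrow>\<^sub>0 'k::field) set" where
  left: "a \<in> ideal_I \<Longrightarrow> inA y \<Longrightarrow> tens a y \<in> tensor_ideal"
| right: "a \<in> ideal_I \<Longrightarrow> inA y \<Longrightarrow> tens y a \<in> tensor_ideal"
| zero: "0 \<in> tensor_ideal"
| add: "u \<in> tensor_ideal \<Longrightarrow> v \<in> tensor_ideal \<Longrightarrow> u + v \<in> tensor_ideal"
| smult: "u \<in> tensor_ideal \<Longrightarrow> scale c u \<in> tensor_ideal"

text \<open>Vertices/edges are addressed by paths from the root: the path [] is the root vertex
  (and the trunk edge below it); the path p @ [i] is the i-th child (0-based, left to right)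
  of the vertex at p, and also denotes the edge joining that child to its parent.\<close>

fun valid_pos :: "tree \<Rightarrow> nat list \<Rightarrow> bool" where
  "valid_pos t [] = True"
| "valid_pos Leaf (i # p) = False"
| "valid_pos (Node ts) (i # p) = (i < length ts \<and> valid_pos (ts ! i) p)"

fun subtree_at :: "tree \<Rightarrow> nat list \<Rightarrow> tree" where
  "subtree_at t [] = t"
| "subtree_at Leaf (i # p) = Leaf"
| "subtree_at (Node ts) (i # p) = subtree_at (ts ! i) p"

text \<open>Internal edges: edges joining two internal vertices, i.e. edges into a non-root internal vertex.\<close>
definition internal_edges :: "tree \<Rightarrow> nat list set" where
  "internal_edges t = {p. p \<noteq> [] \<and> valid_pos t p \<and> subtree_at t p \<noteq> Leaf}"

text \<open>Leaf positions (the leaves of t); the root-to-leaf path of the leaf at l meets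
  the edge p iff p is a prefix of l.\<close>
definition leaf_positions :: "tree \<Rightarrow> nat list set" where
  "leaf_positions t = {l. valid_pos t l \<and> subtree_at t l = Leaf}"

text \<open>Admissible cuts other than the total cut: sets of internal edges (the empty set being the
  empty cut) such that every root-to-leaf path meets at most one chosen edge.\<close>
definition admissible_cut :: "tree \<Rightarrow> nat list set \<Rightarrow> bool" where
  "admissible_cut t C \<longleftrightarrow> C \<subseteq> internal_edges t \<and>
     (\<forall>l\<in>leaf_positions t. card {p\<in>C. prefix p l} \<le> 1)"

lemma set_zip_upt_size:
  "(i, s::tree) \<in> set (zip [0..<length ts] ts) \<Longrightarrow> size s < Suc (size_list size ts)"
  by (auto dest: set_zip_rightD size_mem_list)

text \<open>P^C(t): the component containing the root (cut subtrees replaced by leaves).\<close>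
function prune :: "nat list set \<Rightarrow> nat list \<Rightarrow> tree \<Rightarrow> tree" where
  "prune C p t = (if p \<in> C then Leaf else
     (case t of Leaf \<Rightarrow> Leaf
      | Node ts \<Rightarrow> Node (map (\<lambda>(i, s). prune C (p @ [i]) s) (zip [0..<length ts] ts))))"
  by pat_completeness auto
termination
  by (relation "measure (\<lambda>(C, p, t). size t)") (auto dest: set_zip_upt_size)

function cutoffs :: "nat list set \<Rightarrow> nat list \<Rightarrow> tree \<Rightarrow> tree list" where
  "cutoffs C p t = (if p \<in> C then [t] else
     (case t of Leaf \<Rightarrow> []
      | Node ts \<Rightarrow> concat (map (\<lambda>(i, s). cutoffs C (p @ [i]) s) (zip [0..<length ts] ts))))"
  by pat_completeness auto
termination
  by (relation "measure (\<lambda>(C, p, t). size t)") (auto dest: set_zip_upt_size)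

definition P_cut :: "tree \<Rightarrow> nat list set \<Rightarrow> tree" where
  "P_cut t C = prune C [] t"

definition G_cut :: "tree \<Rightarrow> nat list set \<Rightarrow> (tree \<Rightarrow>\<^sub>0 'k::comm_semiring_1)" where
  "G_cut t C = foldr (\<lambda>s v. Star (vec s) v) (cutoffs C [] t) (vec Leaf)"

definition Delta :: "tree \<Rightarrow> (tree \<times> tree \<Rightarrow>\<^sub>0 'k::comm_semiring_1)" where
  "Delta t = (if t = Leaf then tens (vec Leaf) (vec Leaf) else
     (\<Sum>C\<in>{C. admissible_cut t C}. tens (G_cut t C) (vec (P_cut t C)))
     + tens (vec t) (vec Leaf))"

text \<open>DLR t is a representative in A \<otimes> A of \<Delta>_LR(t) \<in> (A/I) \<otimes> (A/I): its image under the
  projection is \<Delta>_LR(t), since * descends to A/I.\<close>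

fun DLR :: "tree \<Rightarrow> (tree \<times> tree \<Rightarrow>\<^sub>0 'k::comm_semiring_1)" where
  "DLR Leaf = tens (vec Leaf) (vec Leaf)"
| "DLR (Node [t1, t2]) =
     (\<Sum>(x, s)\<in>Poly_Mapping.keys (DLR t1). \<Sum>(z, r)\<in>Poly_Mapping.keys (DLR t2).
        scale (Poly_Mapping.lookup (DLR t1) (x, s) * Poly_Mapping.lookup (DLR t2) (z, r))
          (tens (Star (vec x) (vec z)) (vec (Node [s, r]))))
     + tens (vec (Node [t1, t2])) (vec Leaf)"
| "DLR (Node _) = 0"

end

theory Submission
  imports Defs
begin


lemma lookup_scale[simp]: "Poly_Mapping.lookup (scale c v) x = c * Poly_Mapping.lookup v x"
  unfolding scale_def by transfer (simp add: when_def)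

definition bas :: "'a \<Rightarrow> ('a \<Rightarrow>\<^sub>0 'k::{zero,one})" where
  "bas a = Poly_Mapping.single a 1"

lemma vec_bas: "vec = bas" unfolding vec_def bas_def by auto

definition lin :: "('a \<Rightarrow> ('b \<Rightarrow>\<^sub>0 'k::comm_semiring_1)) \<Rightarrow> ('a \<Rightarrow>\<^sub>0 'k) \<Rightarrow> ('b \<Rightarrow>\<^sub>0 'k)" where
  "lin f v = (\<Sum>a\<in>Poly_Mapping.keys v. scale (Poly_Mapping.lookup v a) (f a))"

lemma scale_0[simp]: "scale 0 v = 0" by (rule poly_mapping_eqI) simp
lemma scale_zero[simp]: "scale c 0 = 0" by (rule poly_mapping_eqI) simp
lemma scale_1[simp]: "scale (1::'k::comm_semiring_1) v = v" by (rule poly_mapping_eqI) simp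
lemma scale_add: "scale c (u + v) = scale c u + scale c v"
  by (rule poly_mapping_eqI) (simp add: lookup_add distrib_left)
lemma scale_add_left: "scale (c + d) u = scale c u + scale d u"
  by (rule poly_mapping_eqI) (simp add: lookup_add distrib_right)
lemma scale_scale[simp]: "scale c (scale d u) = scale (c * d) u"
  by (rule poly_mapping_eqI) (simp add: mult.assoc)
lemma scale_sum: "scale c (sum f A) = (\<Sum>a\<in>A. scale c (f a))"
  by (rule poly_mapping_eqI) (simp add: lookup_sum sum_distrib_left)
lemma scale_single: "scale c (Poly_Mapping.single a d) = Poly_Mapping.single a (c * d)"
  by (rule poly_mapping_eqI) (simp add: lookup_single when_def)
lemma scale_bas: "scale (c::'k::comm_semiring_1) (bas a) = Poly_Mapping.single a c"
  by (rule poly_mapping_eqI) (simp add: bas_def lookup_single when_def)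

lemma lin_superset:
  assumes "finite S" "Poly_Mapping.keys v \<subseteq> S"
  shows "lin f v = (\<Sum>a\<in>S. scale (Poly_Mapping.lookup v a) (f a))"
  unfolding lin_def
  by (rule sum.mono_neutral_left) (use assms in \<open>auto simp: in_keys_iff\<close>)

lemma lin_add: "lin f (u + v) = lin f u + lin f v"
proof -
  let ?S = "Poly_Mapping.keys u \<union> Poly_Mapping.keys v"
  have f: "finite ?S" by simp
  have k: "Poly_Mapping.keys (u+v) \<subseteq> ?S" by (rule keys_add)
  have "lin f (u+v) = (\<Sum>a\<in>?S. scale (Poly_Mapping.lookup (u+v) a) (f a))"
    by (rule lin_superset[OF f k])
  also have "\<dots> = (\<Sum>a\<in>?S. scale (Poly_Mapping.lookup u a) (f a)) + (\<Sum>a\<in>?S. scale (Poly_Mapping.lookup v a) (f a))"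
    unfolding lookup_add scale_add_left sum.distrib ..
  also have "\<dots> = lin f u + lin f v"
    using lin_superset[OF f, of u f] lin_superset[OF f, of v f] by simp
  finally show ?thesis .
qed

lemma lin_zero[simp]: "lin f 0 = 0" by (simp add: lin_def)

lemma lin_scale: "lin f (scale c u) = scale c (lin f u)"
proof -
  have "lin f (scale c u) = (\<Sum>a\<in>Poly_Mapping.keys u. scale (Poly_Mapping.lookup (scale c u) a) (f a))"
    by (rule lin_superset) (auto simp: in_keys_iff)
  then show ?thesis by (simp add: lin_def scale_sum)
qed

lemma lin_sum: "lin f (sum u I) = (\<Sum>i\<in>I. lin f (u i))"
  by (induct I rule: infinite_finite_induct) (auto simp: lin_add)

lemma lin_single: "lin f (Poly_Mapping.single a c) = scale c (f a)"
proof -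
  have "lin f (Poly_Mapping.single a c) = (\<Sum>b\<in>{a}. scale (Poly_Mapping.lookup (Poly_Mapping.single a c) b) (f b))"
    by (rule lin_superset) auto
  then show ?thesis by simp
qed

lemma lin_bas[simp]: "lin f (bas a) = f a"
  by (simp add: bas_def lin_single)

lemma lin_vec[simp]: "lin f (vec a) = f a"
  by (simp add: vec_bas)

lemma lin_cong: "(\<And>a. a \<in> Poly_Mapping.keys v \<Longrightarrow> f a = g a) \<Longrightarrow> lin f v = lin g v"
  unfolding lin_def by (rule sum.cong) auto

lemma lin_fun_add: "lin (\<lambda>a. f a + g a) v = lin f v + lin g v"
  by (simp add: lin_def scale_add sum.distrib)

lemma lin_fun_zero[simp]: "lin (\<lambda>a. 0) v = 0"
  by (simp add: lin_def)

lemma lin_fun_scale: "lin (\<lambda>a. scale c (f a)) v = scale c (lin f v)"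
  by (simp add: lin_def scale_sum mult.commute)

lemma lin_fun_sum: "lin (\<lambda>a. \<Sum>i\<in>I. f i a) v = (\<Sum>i\<in>I. lin (f i) v)"
  by (induct I rule: infinite_finite_induct) (auto simp: lin_fun_add)

lemma lin_lin: "lin g (lin f v) = lin (\<lambda>a. lin g (f a)) v"
proof -
  have "lin g (lin f v) = lin g (\<Sum>a\<in>Poly_Mapping.keys v. scale (Poly_Mapping.lookup v a) (f a))"
    by (simp only: lin_def[of f v])
  also have "\<dots> = (\<Sum>a\<in>Poly_Mapping.keys v. scale (Poly_Mapping.lookup v a) (lin g (f a)))"
    by (simp only: lin_sum lin_scale)
  also have "\<dots> = lin (\<lambda>a. lin g (f a)) v"
    by (simp only: lin_def[of "\<lambda>a. lin g (f a)" v])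
  finally show ?thesis .
qed

lemma lin_bas_id[simp]: "lin bas v = v"
proof (rule poly_mapping_eqI)
  fix b
  have "Poly_Mapping.lookup (lin bas v) b = (\<Sum>a\<in>Poly_Mapping.keys v. Poly_Mapping.lookup v a * (1 when a = b))"
    by (simp add: lin_def lookup_sum bas_def lookup_single)
  also have "\<dots> = (\<Sum>a\<in>Poly_Mapping.keys v. if a = b then Poly_Mapping.lookup v a else 0)"
    by (rule sum.cong) (auto simp: when_def)
  also have "\<dots> = Poly_Mapping.lookup v b"
    by (simp add: in_keys_iff)
  finally show "Poly_Mapping.lookup (lin bas v) b = Poly_Mapping.lookup v b" .
qed

lemma lin_vec_id[simp]: "lin vec v = v"
  by (simp add: vec_bas)

lemma lin_swap: "lin (\<lambda>a. lin (\<lambda>b. h a b) W) V = lin (\<lambda>b. lin (\<lambda>a. h a b) V) W"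
  unfolding lin_def scale_sum
  by (subst sum.swap) (simp add: mult.commute)

lemma bilin_lin: "bilin f x y = lin (\<lambda>s. lin (\<lambda>r. f s r) y) x"
  by (simp add: bilin_def lin_def scale_sum)

lemma graftmid_lin: "graftmid P v Q = lin (\<lambda>c. vec (Node (P @ c # Q))) v"
  by (simp add: graftmid_def lin_def vec_bas scale_bas)

lemma tens_lin: "tens x y = lin (\<lambda>s. lin (\<lambda>r. bas (s, r)) y) x"
  unfolding tens_def lin_def scale_sum by (simp add: scale_single bas_def)

lemma Star_lin: "Star A B = lin (\<lambda>x. lin (\<lambda>z. star_t x z) B) A"
  by (simp add: Star_def bilin_lin)




lemma lin_graftmid_in: "lin g (graftmid P S Q) = lin (\<lambda>c. g (Node (P@c#Q))) S"
  by (simp add: graftmid_lin lin_lin)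

lemma graftmid_lin_out: "lin (\<lambda>c. graftmid P (f c) Q) S = graftmid P (lin f S) Q"
  by (simp add: graftmid_lin lin_lin)

lemma graft_swap: "lin (\<lambda>c. graftmid (P@c#M) V Q) A = lin (\<lambda>d. graftmid P A (M@d#Q)) V"
  unfolding graftmid_lin by (subst lin_swap) simp

lemma keys_graftmid: "u \<in> Poly_Mapping.keys (graftmid P S Q) \<Longrightarrow> \<exists>c. u = Node (P@c#Q)"
proof -
  assume "u \<in> Poly_Mapping.keys (graftmid P S Q)"
  then have "u \<in> (\<Union>c\<in>Poly_Mapping.keys S. Poly_Mapping.keys (Poly_Mapping.single (Node (P @ c # Q)) (Poly_Mapping.lookup S c)))"
    unfolding graftmid_def by (rule subsetD[OF keys_sum])
  then show ?thesis by (auto split: if_splits)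
qed

definition goodn :: "tree \<Rightarrow> bool" where
  "goodn u \<longleftrightarrow> (\<exists>l. u = Node l \<and> l \<noteq> [])"

lemma keys_graftmid_goodn: "u \<in> Poly_Mapping.keys (graftmid P S Q) \<Longrightarrow> goodn u"
  unfolding goodn_def by (drule keys_graftmid) blast

lemma keys3: "u \<in> Poly_Mapping.keys (a + b + c) \<Longrightarrow> u \<in> Poly_Mapping.keys a \<or> u \<in> Poly_Mapping.keys b \<or> u \<in> Poly_Mapping.keys c"
  by (auto simp: in_keys_iff lookup_add)

lemma star_t_Node_eq: "xs \<noteq> [] \<Longrightarrow> ys \<noteq> [] \<Longrightarrow> star_t (Node xs) (Node ys) =
        graftmid (butlast xs) (star_t (last xs) (Node ys)) []
      + graftmid (butlast xs) (star_t (last xs) (hd ys)) (tl ys)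
      + graftmid [] (star_t (Node xs) (hd ys)) (tl ys)"
  by simp

lemma star_t_Node_0: "xs = [] \<or> ys = [] \<Longrightarrow> star_t (Node xs) (Node ys) = 0"
  by auto

lemma keys_star_Node: "u \<in> Poly_Mapping.keys (star_t (Node xs) (Node ys) :: tree \<Rightarrow>\<^sub>0 'k::comm_semiring_1) \<Longrightarrow> goodn u"
proof (cases "xs = [] \<or> ys = []")
  case True
  assume "u \<in> Poly_Mapping.keys (star_t (Node xs) (Node ys) :: tree \<Rightarrow>\<^sub>0 'k)"
  then show ?thesis by (simp only: star_t_Node_0[OF True] keys_zero empty_iff)
next
  case False
  assume u: "u \<in> Poly_Mapping.keys (star_t (Node xs) (Node ys) :: tree \<Rightarrow>\<^sub>0 'k)"
  have "u \<in> Poly_Mapping.keys (graftmid (butlast xs) (star_t (last xs) (Node ys) :: tree \<Rightarrow>\<^sub>0 'k) []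
      + graftmid (butlast xs) (star_t (last xs) (hd ys)) (tl ys)
      + graftmid [] (star_t (Node xs) (hd ys)) (tl ys))"
  proof -
    have ne: "xs \<noteq> []" "ys \<noteq> []" using False by auto
    from u show ?thesis by (simp only: star_t_Node_eq[OF ne])
  qed
  then have "u \<in> Poly_Mapping.keys (graftmid (butlast xs) (star_t (last xs) (Node ys) :: tree \<Rightarrow>\<^sub>0 'k) [])
     \<or> u \<in> Poly_Mapping.keys (graftmid (butlast xs) (star_t (last xs) (hd ys) :: tree \<Rightarrow>\<^sub>0 'k) (tl ys))
     \<or> u \<in> Poly_Mapping.keys (graftmid [] (star_t (Node xs) (hd ys) :: tree \<Rightarrow>\<^sub>0 'k) (tl ys))"
    by (rule keys3)
  then show ?thesis by (elim disjE) (erule keys_graftmid_goodn)+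
qed

lemma star_t_Leaf_right[simp]: "star_t u Leaf = vec u"
  by (cases u) auto

definition assoc_t :: "tree \<Rightarrow> tree \<Rightarrow> tree \<Rightarrow> bool" where
  "assoc_t a b c \<longleftrightarrow> (lin (\<lambda>u. star_t u c) (star_t a b) :: tree \<Rightarrow>\<^sub>0 'k::comm_semiring_1) = lin (\<lambda>v. star_t a v) (star_t b c)"

lemma R1:
  assumes "assoc_t TYPE('k::comm_semiring_1) xk y z"
  shows "(lin (\<lambda>u. prec_t u z) (prec_t (Node (X@[xk])) y) :: tree \<Rightarrow>\<^sub>0 'k) = lin (\<lambda>v. prec_t (Node (X@[xk])) v) (star_t y z)"
  using assms by (simp add: assoc_t_def lin_graftmid_in graftmid_lin_out)


lemmas gsw = graft_swap graft_swap[of "[]", simplified]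

lemma R2a:
  assumes "assoc_t TYPE('k::comm_semiring_1) x y0 z"
  shows "(lin (\<lambda>u. prec_t u z) (succ_t x (Node [y0])) :: tree \<Rightarrow>\<^sub>0 'k) = lin (\<lambda>v. succ_t x v) (prec_t (Node [y0]) z)"
  using assms by (simp add: assoc_t_def lin_graftmid_in graftmid_lin_out)

lemma R2b:
  shows "(lin (\<lambda>u. prec_t u z) (succ_t x (Node (y0#Ym@[yl]))) :: tree \<Rightarrow>\<^sub>0 'k::comm_semiring_1) = lin (\<lambda>v. succ_t x v) (prec_t (Node (y0#Ym@[yl])) z)"
  by (simp add: lin_graftmid_in graftmid_lin_out gsw butlast_append)

lemma R3:
  assumes "assoc_t TYPE('k::comm_semiring_1) x y z0"
  shows "(lin (\<lambda>u. succ_t u (Node (z0#Z))) (star_t x y) :: tree \<Rightarrow>\<^sub>0 'k) = lin (\<lambda>v. succ_t x v) (succ_t y (Node (z0#Z)))"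
  using assms by (simp add: assoc_t_def lin_graftmid_in graftmid_lin_out)

lemma R4a:
  assumes "assoc_t TYPE('k::comm_semiring_1) x y0 z0"
  shows "(lin (\<lambda>u. dot_t u (Node (z0#Z))) (succ_t x (Node [y0])) :: tree \<Rightarrow>\<^sub>0 'k) = lin (\<lambda>v. succ_t x v) (dot_t (Node [y0]) (Node (z0#Z)))"
  using assms by (simp add: assoc_t_def lin_graftmid_in graftmid_lin_out)

lemma R4b:
  shows "(lin (\<lambda>u. dot_t u (Node (z0#Z))) (succ_t x (Node (y0#Ym@[yl]))) :: tree \<Rightarrow>\<^sub>0 'k::comm_semiring_1) = lin (\<lambda>v. succ_t x v) (dot_t (Node (y0#Ym@[yl])) (Node (z0#Z)))"
  by (simp add: lin_graftmid_in graftmid_lin_out gsw butlast_append)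

lemma R5:
  assumes "assoc_t TYPE('k::comm_semiring_1) xk y z0"
  shows "(lin (\<lambda>u. dot_t u (Node (z0#Z))) (prec_t (Node (X@[xk])) y) :: tree \<Rightarrow>\<^sub>0 'k) = lin (\<lambda>v. dot_t (Node (X@[xk])) v) (succ_t y (Node (z0#Z)))"
  using assms by (simp add: assoc_t_def lin_graftmid_in graftmid_lin_out)

lemma R6a:
  assumes "assoc_t TYPE('k::comm_semiring_1) xk y0 z"
  shows "(lin (\<lambda>u. prec_t u z) (dot_t (Node (X@[xk])) (Node [y0])) :: tree \<Rightarrow>\<^sub>0 'k) = lin (\<lambda>v. dot_t (Node (X@[xk])) v) (prec_t (Node [y0]) z)"
  using assms by (simp add: assoc_t_def lin_graftmid_in graftmid_lin_out)

lemma R6b: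
  shows "(lin (\<lambda>u. prec_t u z) (dot_t (Node (X@[xk])) (Node (y0#Ym@[yl]))) :: tree \<Rightarrow>\<^sub>0 'k::comm_semiring_1) = lin (\<lambda>v. dot_t (Node (X@[xk])) v) (prec_t (Node (y0#Ym@[yl])) z)"
  by (simp add: lin_graftmid_in graftmid_lin_out gsw butlast_append)

lemma R7a:
  assumes "assoc_t TYPE('k::comm_semiring_1) xk y0 z0"
  shows "(lin (\<lambda>u. dot_t u (Node (z0#Z))) (dot_t (Node (X@[xk])) (Node [y0])) :: tree \<Rightarrow>\<^sub>0 'k) = lin (\<lambda>v. dot_t (Node (X@[xk])) v) (dot_t (Node [y0]) (Node (z0#Z)))"
  using assms by (simp add: assoc_t_def lin_graftmid_in graftmid_lin_out)

lemma R7b: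
  shows "(lin (\<lambda>u. dot_t u (Node (z0#Z))) (dot_t (Node (X@[xk])) (Node (y0#Ym@[yl]))) :: tree \<Rightarrow>\<^sub>0 'k::comm_semiring_1) = lin (\<lambda>v. dot_t (Node (X@[xk])) v) (dot_t (Node (y0#Ym@[yl])) (Node (z0#Z)))"
  by (simp add: lin_graftmid_in graftmid_lin_out gsw butlast_append)


lemma star_split: "goodn u \<Longrightarrow> goodn v \<Longrightarrow> (star_t u v :: tree \<Rightarrow>\<^sub>0 'k::comm_semiring_1) = prec_t u v + dot_t u v + succ_t u v"
  unfolding goodn_def by (elim exE conjE) simp

lemma star_Node_nil_left: "goodn v \<Longrightarrow> (star_t (Node []) v :: tree \<Rightarrow>\<^sub>0 'k::comm_semiring_1) = 0"
  unfolding goodn_def by auto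

lemma star_Node_nil_right: "goodn u \<Longrightarrow> (star_t u (Node []) :: tree \<Rightarrow>\<^sub>0 'k::comm_semiring_1) = 0"
  unfolding goodn_def by auto

lemma assoc_step:
  fixes x y z :: tree
  assumes gx: "goodn x" and gy: "goodn y" and gz: "goodn z"
  and r1: "(lin (\<lambda>u. prec_t u z) (prec_t x y) :: tree \<Rightarrow>\<^sub>0 'k::comm_semiring_1) = lin (\<lambda>v. prec_t x v) (star_t y z)"
  and r2: "(lin (\<lambda>u. prec_t u z) (succ_t x y) :: tree \<Rightarrow>\<^sub>0 'k) = lin (\<lambda>v. succ_t x v) (prec_t y z)"
  and r3: "(lin (\<lambda>u. succ_t u z) (star_t x y) :: tree \<Rightarrow>\<^sub>0 'k) = lin (\<lambda>v. succ_t x v) (succ_t y z)"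
  and r4: "(lin (\<lambda>u. dot_t u z) (succ_t x y) :: tree \<Rightarrow>\<^sub>0 'k) = lin (\<lambda>v. succ_t x v) (dot_t y z)"
  and r5: "(lin (\<lambda>u. dot_t u z) (prec_t x y) :: tree \<Rightarrow>\<^sub>0 'k) = lin (\<lambda>v. dot_t x v) (succ_t y z)"
  and r6: "(lin (\<lambda>u. prec_t u z) (dot_t x y) :: tree \<Rightarrow>\<^sub>0 'k) = lin (\<lambda>v. dot_t x v) (prec_t y z)"
  and r7: "(lin (\<lambda>u. dot_t u z) (dot_t x y) :: tree \<Rightarrow>\<^sub>0 'k) = lin (\<lambda>v. dot_t x v) (dot_t y z)"
  shows "assoc_t TYPE('k) x y z"
proof -
  obtain xs ys zs where x: "x = Node xs" and y: "y = Node ys" and z: "z = Node zs"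
    using gx gy gz unfolding goodn_def by blast
  have kxy: "\<And>u. u \<in> Poly_Mapping.keys (star_t x y :: tree \<Rightarrow>\<^sub>0 'k) \<Longrightarrow> goodn u"
    unfolding x y by (rule keys_star_Node)
  have kyz: "\<And>u. u \<in> Poly_Mapping.keys (star_t y z :: tree \<Rightarrow>\<^sub>0 'k) \<Longrightarrow> goodn u"
    unfolding y z by (rule keys_star_Node)
  have "(lin (\<lambda>u. star_t u z) (star_t x y) :: tree \<Rightarrow>\<^sub>0 'k)
      = lin (\<lambda>u. prec_t u z + dot_t u z + succ_t u z) (star_t x y)"
    by (rule lin_cong) (simp only: star_split[OF kxy gz])
  also have "\<dots> = lin (\<lambda>u. prec_t u z) (star_t x y) + lin (\<lambda>u. dot_t u z) (star_t x y) + lin (\<lambda>u. succ_t u z) (star_t x y)"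
    by (simp only: lin_fun_add)
  also have "\<dots> = (lin (\<lambda>u. prec_t u z) (prec_t x y) + lin (\<lambda>u. prec_t u z) (dot_t x y) + lin (\<lambda>u. prec_t u z) (succ_t x y))
     + (lin (\<lambda>u. dot_t u z) (prec_t x y) + lin (\<lambda>u. dot_t u z) (dot_t x y) + lin (\<lambda>u. dot_t u z) (succ_t x y))
     + lin (\<lambda>u. succ_t u z) (star_t x y)"
    by (simp only: star_split[OF gx gy] lin_add)
  also have "\<dots> = lin (\<lambda>v. prec_t x v) (star_t y z) + lin (\<lambda>v. dot_t x v) (prec_t y z) + lin (\<lambda>v. succ_t x v) (prec_t y z)
     + (lin (\<lambda>v. dot_t x v) (succ_t y z) + lin (\<lambda>v. dot_t x v) (dot_t y z) + lin (\<lambda>v. succ_t x v) (dot_t y z))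
     + lin (\<lambda>v. succ_t x v) (succ_t y z)"
    by (simp only: r1 r2 r3 r4 r5 r6 r7)
  also have "\<dots> = lin (\<lambda>v. prec_t x v) (star_t y z) + lin (\<lambda>v. dot_t x v) (star_t y z) + lin (\<lambda>v. succ_t x v) (star_t y z)"
    by (simp only: star_split[OF gy gz] lin_add ac_simps)
  also have "\<dots> = lin (\<lambda>v. prec_t x v + dot_t x v + succ_t x v) (star_t y z)"
    by (simp only: lin_fun_add)
  also have "\<dots> = lin (\<lambda>v. star_t x v) (star_t y z)"
    by (rule lin_cong) (simp only: star_split[OF gx kyz])
  finally show ?thesis unfolding assoc_t_def .
qed

lemma goodn_Node: "l \<noteq> [] \<Longrightarrow> goodn (Node l)"
  unfolding goodn_def by blast

lemma star_t_Leaf_fun[simp]: "star_t Leaf = vec"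
  by (rule ext) simp

lemma assoc_all: "assoc_t TYPE('k::comm_semiring_1) a b c"
proof (induction "size a + size b + size c" arbitrary: a b c rule: less_induct)
  case less
  show ?case
  proof (cases "a = Leaf \<or> b = Leaf \<or> c = Leaf")
    case True
    then show ?thesis unfolding assoc_t_def by (auto simp: lin_fun_add)
  next
    case False
    then obtain as bs cs where a: "a = Node as" and b: "b = Node bs" and c: "c = Node cs"
      by (metis tree.exhaust)
    show ?thesis
    proof (cases "as = []")
      case True
      have "(lin (\<lambda>v. star_t a v) (star_t b c) :: tree \<Rightarrow>\<^sub>0 'k) = lin (\<lambda>v. 0) (star_t b c)"
        by (rule lin_cong) (simp only: a True star_Node_nil_left[OF keys_star_Node[of _ bs cs, folded b c]])
      then show ?thesis unfolding assoc_t_def using True a b by simp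
    next
      case asn: False
      show ?thesis
      proof (cases "bs = []")
        case True
        then show ?thesis unfolding assoc_t_def using a b c by simp
      next
        case bsn: False
        show ?thesis
        proof (cases "cs = []")
          case True
          have "(lin (\<lambda>u. star_t u c) (star_t a b) :: tree \<Rightarrow>\<^sub>0 'k) = lin (\<lambda>v. 0) (star_t a b)"
            by (rule lin_cong) (simp only: c True star_Node_nil_right[OF keys_star_Node[of _ as bs, folded a b]])
          then show ?thesis unfolding assoc_t_def using True b c by simp
        next
          case csn: False
          obtain X xk where as: "as = X @ [xk]" using asn by (metis rev_exhaust)
          obtain y0 Y where bs: "bs = y0 # Y" using bsn by (metis list.exhaust)
          obtain z0 Z where cs: "cs = z0 # Z" using csn by (metis list.exhaust)
          have sxk: "size xk < size a" unfolding a as by (rule size_mem_Node) simp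
          have sy0: "size y0 < size b" unfolding b bs by (rule size_mem_Node) simp
          have sz0: "size z0 < size c" unfolding c cs by (rule size_mem_Node) simp
          have ga: "goodn a" "goodn b" "goodn c" using a b c asn bsn csn goodn_Node by auto
          have i1: "assoc_t TYPE('k) xk b c" using less sxk by simp
          have i3: "assoc_t TYPE('k) a b z0" using less sz0 by simp
          have i5: "assoc_t TYPE('k) xk b z0" using less sxk sz0 by simp
          show ?thesis
          proof (cases Y rule: rev_exhaust)
            case Nil
            have i2: "assoc_t TYPE('k) a y0 c" using less sy0 by simp
            have i4: "assoc_t TYPE('k) a y0 z0" using less sy0 sz0 by simp
            have i6: "assoc_t TYPE('k) xk y0 c" using less sy0 sxk by simp
            have i7: "assoc_t TYPE('k) xk y0 z0" using less sy0 sxk sz0 by simp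
            show ?thesis
              apply (rule assoc_step[OF ga])
              subgoal unfolding a as by (rule R1[OF i1[unfolded a as]])
              subgoal unfolding b bs Nil by (rule R2a[OF i2[unfolded b bs Nil]])
              subgoal unfolding c cs by (rule R3[OF i3[unfolded c cs]])
              subgoal unfolding b bs Nil c cs by (rule R4a[OF i4])
              subgoal unfolding a as c cs by (rule R5[OF i5])
              subgoal unfolding a as b bs Nil by (rule R6a[OF i6])
              subgoal unfolding a as b bs Nil c cs by (rule R7a[OF i7])
              done
          next
            case (snoc Ym yl)
            show ?thesis
              apply (rule assoc_step[OF ga])
              subgoal unfolding a as by (rule R1[OF i1[unfolded a as]])
              subgoal unfolding b bs snoc by (rule R2b)
              subgoal unfolding c cs by (rule R3[OF i3[unfolded c cs]])
              subgoal unfolding b bs snoc c cs by (rule R4b)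
              subgoal unfolding a as c cs by (rule R5[OF i5])
              subgoal unfolding a as b bs snoc by (rule R6b)
              subgoal unfolding a as b bs snoc c cs by (rule R7b)
              done
          qed
        qed
      qed
    qed
  qed
qed

lemma Star_assoc: "Star (Star A B) C = (Star A (Star B C) :: tree \<Rightarrow>\<^sub>0 'k::comm_semiring_1)"
proof -
  have "Star (Star A B) C = lin (\<lambda>a. lin (\<lambda>b. lin (\<lambda>c. lin (\<lambda>u. star_t u c) (star_t a b)) C) B) A"
    unfolding Star_lin lin_lin by (subst lin_swap) (rule refl)
  also have "\<dots> = lin (\<lambda>a. lin (\<lambda>b. lin (\<lambda>c. lin (\<lambda>v. star_t a v) (star_t b c)) C) B) A"
    using assoc_all[where 'k='k] unfolding assoc_t_def by simp
  also have "\<dots> = Star A (Star B C)"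
    unfolding Star_lin lin_lin ..
  finally show ?thesis .
qed




lemma finite_prefixes_set: "finite {p. prefix p l}"
  using set_prefixes_eq[of l] by (metis List.finite_set)

lemma finite_valid: "finite {p. valid_pos t p}"
proof (induction t)
  case Leaf
  have "{p. valid_pos Leaf p} = {[]}"
    by (auto elim: valid_pos.elims)
  then show ?case by simp
next
  case (Node ts)
  have "{p. valid_pos (Node ts) p} \<subseteq> {[]} \<union> (\<Union>i<length ts. (Cons i) ` {p. valid_pos (ts!i) p})"
  proof
    fix p assume "p \<in> {p. valid_pos (Node ts) p}"
    then show "p \<in> {[]} \<union> (\<Union>i<length ts. (Cons i) ` {p. valid_pos (ts!i) p})"
      by (cases p) auto
  qed
  moreover have "finite ({[]} \<union> (\<Union>i<length ts. (Cons i) ` {p. valid_pos (ts!i) p}))"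
    using Node by auto
  ultimately show ?case by (rule finite_subset)
qed

lemma finite_internal: "finite (internal_edges t)"
  unfolding internal_edges_def by (rule finite_subset[OF _ finite_valid]) auto

lemma finite_adm: "finite {C. admissible_cut t C}"
  unfolding admissible_cut_def
  by (rule finite_subset[of _ "Pow (internal_edges t)"]) (auto simp: finite_internal)

lemma prune_cong:
  "(\<And>q. p @ q \<in> C \<longleftrightarrow> p' @ q \<in> C') \<Longrightarrow> prune C p s = prune C' p' s"
proof (induction s arbitrary: p p')
  case Leaf
  have "p \<in> C \<longleftrightarrow> p' \<in> C'" using Leaf[of "[]"] by simp
  then show ?case by (subst (1 2) prune.simps) (simp del: prune.simps)
next
  case (Node ts)
  have e: "p \<in> C \<longleftrightarrow> p' \<in> C'" using Node.prems[of "[]"] by simp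
  have m: "map (\<lambda>(i, s). prune C (p @ [i]) s) (zip [0..<length ts] ts)
         = map (\<lambda>(i, s). prune C' (p' @ [i]) s) (zip [0..<length ts] ts)"
  proof (rule map_cong[OF refl], clarify)
    fix i s assume "(i, s) \<in> set (zip [0..<length ts] ts)"
    then have "s \<in> set ts" by (rule set_zip_rightD)
    moreover have "\<And>q. (p @ [i]) @ q \<in> C \<longleftrightarrow> (p' @ [i]) @ q \<in> C'"
      using Node.prems[of "i # _"] by simp
    ultimately show "prune C (p @ [i]) s = prune C' (p' @ [i]) s"
      using Node.IH by blast
  qed
  show ?case
    by (subst (1 2) prune.simps) (simp del: prune.simps add: e m)
qed

lemma cutoffs_cong:
  "(\<And>q. p @ q \<in> C \<longleftrightarrow> p' @ q \<in> C') \<Longrightarrow> cutoffs C p s = cutoffs C' p' s"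
proof (induction s arbitrary: p p')
  case Leaf
  have "p \<in> C \<longleftrightarrow> p' \<in> C'" using Leaf[of "[]"] by simp
  then show ?case by (subst (1 2) cutoffs.simps) (simp del: cutoffs.simps)
next
  case (Node ts)
  have e: "p \<in> C \<longleftrightarrow> p' \<in> C'" using Node.prems[of "[]"] by simp
  have m: "map (\<lambda>(i, s). cutoffs C (p @ [i]) s) (zip [0..<length ts] ts)
         = map (\<lambda>(i, s). cutoffs C' (p' @ [i]) s) (zip [0..<length ts] ts)"
  proof (rule map_cong[OF refl], clarify)
    fix i s assume "(i, s) \<in> set (zip [0..<length ts] ts)"
    then have "s \<in> set ts" by (rule set_zip_rightD)
    moreover have "\<And>q. (p @ [i]) @ q \<in> C \<longleftrightarrow> (p' @ [i]) @ q \<in> C'"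
      using Node.prems[of "i # _"] by simp
    ultimately show "cutoffs C (p @ [i]) s = cutoffs C' (p' @ [i]) s"
      using Node.IH by blast
  qed
  show ?case
    by (subst (1 2) cutoffs.simps) (simp del: cutoffs.simps add: e m)
qed

definition dn :: "nat \<Rightarrow> nat list set \<Rightarrow> nat list set" where
  "dn i C = {q. i # q \<in> C}"

definition sh :: "nat \<Rightarrow> nat list set \<Rightarrow> nat list set" where
  "sh i C = (Cons i) ` C"

lemma zip2: "zip [0..<length [t1, t2]] [t1, t2] = [(0, t1), (1, t2)]"
  by (simp add: upt_rec)

lemma P_cut_Node2:
  assumes "[] \<notin> C"
  shows "P_cut (Node [t1, t2]) C = Node [P_cut t1 (dn 0 C), P_cut t2 (dn 1 C)]"
proof -
  have "P_cut (Node [t1, t2]) C = Node [prune C [0] t1, prune C [1] t2]"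
    unfolding P_cut_def using assms by (subst prune.simps) (simp only: zip2 if_False tree.case list.map prod.case append_Nil)
  also have "prune C [0] t1 = P_cut t1 (dn 0 C)"
    unfolding P_cut_def dn_def by (rule prune_cong) simp
  also have "prune C [1] t2 = P_cut t2 (dn 1 C)"
    unfolding P_cut_def dn_def by (rule prune_cong) simp
  finally show ?thesis .
qed

lemma cutoffs_Node2:
  assumes "[] \<notin> C"
  shows "cutoffs C [] (Node [t1, t2]) = cutoffs (dn 0 C) [] t1 @ cutoffs (dn 1 C) [] t2"
proof -
  have "cutoffs C [] (Node [t1, t2]) = cutoffs C [0] t1 @ cutoffs C [1] t2"
    using assms by (subst cutoffs.simps) (simp only: zip2 if_False tree.case list.map prod.case concat.simps append_Nil2 append_Nil)
  also have "cutoffs C [0] t1 = cutoffs (dn 0 C) [] t1"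
    unfolding dn_def by (rule cutoffs_cong) simp
  also have "cutoffs C [1] t2 = cutoffs (dn 1 C) [] t2"
    unfolding dn_def by (rule cutoffs_cong) simp
  finally show ?thesis .
qed

lemma foldr_Star:
  "foldr (\<lambda>s v. Star (vec s) v) L Y = Star (foldr (\<lambda>s v. Star (vec s) v) L (vec Leaf)) (Y :: tree \<Rightarrow>\<^sub>0 'k::comm_semiring_1)"
proof (induction L)
  case Nil
  show ?case by (simp add: Star_lin)
next
  case (Cons s L)
  then show ?case by (simp add: Star_assoc)
qed

lemma G_cut_Node2:
  assumes "[] \<notin> C"
  shows "(G_cut (Node [t1, t2]) C :: tree \<Rightarrow>\<^sub>0 'k::comm_semiring_1) = Star (G_cut t1 (dn 0 C)) (G_cut t2 (dn 1 C))"
  unfolding G_cut_def cutoffs_Node2[OF assms] foldr_append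
  by (rule foldr_Star)


lemma leaf_exists:
  "binary_tree s \<Longrightarrow> valid_pos s q \<Longrightarrow> \<exists>l. prefix q l \<and> valid_pos s l \<and> subtree_at s l = Leaf"
proof (induction s arbitrary: q)
  case Leaf
  then have "q = []" by (cases q) auto
  then show ?case by (intro exI[of _ "[]"]) simp
next
  case (Node ts)
  have len: "length ts = 2" and bin: "\<And>s. s \<in> set ts \<Longrightarrow> binary_tree s"
    using Node.prems(1) by (auto simp: list_all_iff)
  show ?case
  proof (cases q)
    case Nil
    have "ts ! 0 \<in> set ts" using len by simp
    then obtain l where "valid_pos (ts!0) l" "subtree_at (ts!0) l = Leaf"
      using Node.IH[of "ts!0" "[]"] bin by auto
    then show ?thesis using Nil len by (intro exI[of _ "0 # l"]) simp
  next
    case (Cons i q')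
    then have i: "i < length ts" and v: "valid_pos (ts!i) q'" using Node.prems(2) by auto
    have "ts ! i \<in> set ts" using i by simp
    then obtain l where "prefix q' l" "valid_pos (ts!i) l" "subtree_at (ts!i) l = Leaf"
      using Node.IH[of "ts!i" q'] bin v by auto
    then show ?thesis using Cons i by (intro exI[of _ "i # l"]) simp
  qed
qed

definition AC :: "tree \<Rightarrow> nat list set set" where
  "AC t = (if t = Leaf then {C. admissible_cut t C} else insert {[]} {C. admissible_cut t C})"

lemma adm_nil: "admissible_cut t C \<Longrightarrow> [] \<notin> C"
  unfolding admissible_cut_def internal_edges_def by auto

lemma card_le1_sub: "finite B \<Longrightarrow> A \<subseteq> B \<Longrightarrow> card B \<le> 1 \<Longrightarrow> card A \<le> 1"
  by (meson card_mono order_trans)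

lemma adm_dn:
  assumes bin: "list_all binary_tree ts" and i: "i < length ts"
    and adm: "admissible_cut (Node ts) C"
  shows "dn i C \<in> AC (ts ! i)"
proof -
  let ?s = "ts ! i"
  have bs: "binary_tree ?s" using bin i by (simp add: list_all_length)
  have IE: "\<And>p. p \<in> C \<Longrightarrow> p \<in> internal_edges (Node ts)" using adm unfolding admissible_cut_def by auto
  have CARD: "\<And>l. l \<in> leaf_positions (Node ts) \<Longrightarrow> card {p\<in>C. prefix p l} \<le> 1"
    using adm unfolding admissible_cut_def by auto
  show ?thesis
  proof (cases "[] \<in> dn i C")
    case True
    then have iC: "[i] \<in> C" unfolding dn_def by simp
    then have sne: "?s \<noteq> Leaf" using IE[OF iC] unfolding internal_edges_def by simp
    have "dn i C = {[]}"
    proof (rule ccontr)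
      assume "dn i C \<noteq> {[]}"
      then obtain q where q: "q \<in> dn i C" "q \<noteq> []" using True by blast
      then have iq: "i # q \<in> C" unfolding dn_def by simp
      then have "valid_pos ?s q" using IE[OF iq] unfolding internal_edges_def by simp
      then obtain l where l: "prefix q l" "valid_pos ?s l" "subtree_at ?s l = Leaf"
        using leaf_exists[OF bs] by blast
      have lp: "i # l \<in> leaf_positions (Node ts)" using l i unfolding leaf_positions_def by simp
      have sub: "{[i], i # q} \<subseteq> {p\<in>C. prefix p (i # l)}" using iC iq l(1) by auto
      have fin: "finite {p\<in>C. prefix p (i # l)}"
        by (rule finite_subset[OF _ finite_prefixes_set[of "i # l"]]) auto
      have "card {[i], i # q} \<le> card {p\<in>C. prefix p (i # l)}" by (rule card_mono[OF fin sub])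
      moreover have "card {[i], i # q} = 2" using q(2) by simp
      ultimately show False using CARD[OF lp] by simp
    qed
    then show ?thesis using sne unfolding AC_def by simp
  next
    case False
    have "admissible_cut ?s (dn i C)"
      unfolding admissible_cut_def
    proof (intro conjI ballI subsetI)
      fix q assume q: "q \<in> dn i C"
      then have iq: "i # q \<in> C" unfolding dn_def by simp
      show "q \<in> internal_edges ?s" using IE[OF iq] False q unfolding internal_edges_def by auto
    next
      fix l assume l: "l \<in> leaf_positions ?s"
      have lp: "i # l \<in> leaf_positions (Node ts)" using l i unfolding leaf_positions_def by simp
      have fin: "finite {p\<in>C. prefix p (i # l)}"
        by (rule finite_subset[OF _ finite_prefixes_set[of "i # l"]]) auto
      have "card {q \<in> dn i C. prefix q l} = card ((Cons i) ` {q \<in> dn i C. prefix q l})"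
        by (rule card_image[symmetric]) (simp add: inj_on_def)
      also have "\<dots> \<le> card {p\<in>C. prefix p (i # l)}"
        by (rule card_mono[OF fin]) (auto simp: dn_def)
      also have "\<dots> \<le> 1" by (rule CARD[OF lp])
      finally show "card {q \<in> dn i C. prefix q l} \<le> 1" .
    qed
    then show ?thesis unfolding AC_def by auto
  qed
qed

lemma adm_sh:
  assumes C1: "C1 \<in> AC t1" and C2: "C2 \<in> AC t2"
  shows "admissible_cut (Node [t1, t2]) (sh 0 C1 \<union> sh 1 C2)"
proof -
  let ?t = "Node [t1, t2]"
  let ?C = "sh 0 C1 \<union> sh 1 C2"
  have mem: "p \<in> ?C \<longleftrightarrow> (\<exists>i q. p = i # q \<and> i < 2 \<and> q \<in> [C1, C2] ! i)" for p
    unfolding sh_def by (auto simp: less_2_cases_iff)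
  have ACi: "i < 2 \<Longrightarrow> [C1, C2] ! i \<in> AC ([t1, t2] ! i)" for i
    using C1 C2 by (auto simp: less_2_cases_iff)
  show ?thesis
    unfolding admissible_cut_def
  proof (intro conjI ballI subsetI)
    fix p assume "p \<in> ?C"
    then obtain i q where p: "p = i # q" "i < 2" "q \<in> [C1, C2] ! i" using mem by blast
    show "p \<in> internal_edges ?t"
    proof (cases "[C1, C2] ! i \<in> {C. admissible_cut ([t1, t2] ! i) C}")
      case True
      then have "q \<in> internal_edges ([t1, t2] ! i)" using p unfolding admissible_cut_def by auto
      then show ?thesis using p unfolding internal_edges_def by auto
    next
      case False
      then have "[C1, C2] ! i = {[]}" "[t1, t2] ! i \<noteq> Leaf" using ACi[OF p(2)] unfolding AC_def
        by (auto split: if_splits)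
      then show ?thesis using p unfolding internal_edges_def by auto
    qed
  next
    fix l assume l: "l \<in> leaf_positions ?t"
    then obtain i l' where il: "l = i # l'" by (cases l) (auto simp: leaf_positions_def)
    then have i: "i < 2" and l': "l' \<in> leaf_positions ([t1, t2] ! i)"
      using l unfolding leaf_positions_def by auto
    have sub: "{p \<in> ?C. prefix p l} \<subseteq> (Cons i) ` {q \<in> [C1, C2] ! i. prefix q l'}"
    proof
      fix p assume "p \<in> {p \<in> ?C. prefix p l}"
      then obtain j q where "p = j # q" "j < 2" "q \<in> [C1, C2] ! j" "prefix p l" using mem by blast
      then show "p \<in> (Cons i) ` {q \<in> [C1, C2] ! i. prefix q l'}" using il by auto
    qed
    have fin: "finite ((Cons i) ` {q \<in> [C1, C2] ! i. prefix q l'})"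
      by (rule finite_imageI, rule finite_subset[OF _ finite_prefixes_set[of l']]) auto
    have "card {q \<in> [C1, C2] ! i. prefix q l'} \<le> 1"
    proof (cases "[C1, C2] ! i \<in> {C. admissible_cut ([t1, t2] ! i) C}")
      case True
      then show ?thesis using l' unfolding admissible_cut_def by auto
    next
      case False
      then have "[C1, C2] ! i = {[]}" using ACi[OF i] unfolding AC_def by (auto split: if_splits)
      moreover have "card {q \<in> {[]}. prefix q l'} \<le> 1"
        by (rule card_le1_sub[of "{[]}"]) auto
      ultimately show ?thesis by simp
    qed
    moreover have "card ((Cons i) ` {q \<in> [C1, C2] ! i. prefix q l'}) \<le> card {q \<in> [C1, C2] ! i. prefix q l'}"
      by (rule card_image_le, rule finite_subset[OF _ finite_prefixes_set[of l']]) auto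
    ultimately have "card ((Cons i) ` {q \<in> [C1, C2] ! i. prefix q l'}) \<le> 1"
      by linarith
    then show "card {p \<in> ?C. prefix p l} \<le> 1"
      by (rule card_le1_sub[OF fin sub])
  qed
qed

lemma dn_sh0: "dn 0 (sh 0 C1 \<union> sh 1 C2) = C1" unfolding dn_def sh_def by auto
lemma dn_sh1: "dn 1 (sh 0 C1 \<union> sh 1 C2) = C2" unfolding dn_def sh_def by auto

lemma sh_dn:
  assumes "admissible_cut (Node [t1, t2]) C"
  shows "sh 0 (dn 0 C) \<union> sh 1 (dn 1 C) = C"
proof -
  have "\<And>p. p \<in> C \<Longrightarrow> \<exists>i q. p = i # q \<and> i < 2"
    using assms unfolding admissible_cut_def internal_edges_def
    by (auto simp: neq_Nil_conv)
  then show ?thesis unfolding sh_def dn_def by (auto simp: less_2_cases_iff)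
qed




definition Dcut :: "tree \<Rightarrow> (tree \<times> tree \<Rightarrow>\<^sub>0 'k::comm_semiring_1)" where
  "Dcut t = (\<Sum>C\<in>AC t. tens (G_cut t C) (vec (P_cut t C)))"

lemma finite_AC: "finite (AC t)"
  unfolding AC_def using finite_adm by auto

lemma cutoffs_root: "cutoffs {[]} [] t = [t]"
  by (subst cutoffs.simps) simp

lemma prune_root: "prune {[]} [] t = Leaf"
  by (subst prune.simps) simp

lemma Star_vec_vec: "Star (vec x) (vec z) = star_t x z"
  by (simp add: Star_lin)

lemma Dcut_nonleaf:
  assumes "t \<noteq> Leaf"
  shows "(Dcut t :: tree \<times> tree \<Rightarrow>\<^sub>0 'k::comm_semiring_1)
     = (\<Sum>C\<in>{C. admissible_cut t C}. tens (G_cut t C) (vec (P_cut t C))) + tens (vec t) (vec Leaf)"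
proof -
  have nm: "{[]} \<notin> {C. admissible_cut t C}" using adm_nil by blast
  have G: "(G_cut t {[]} :: tree \<Rightarrow>\<^sub>0 'k) = vec t"
    unfolding G_cut_def cutoffs_root by (simp add: Star_vec_vec)
  have P: "P_cut t {[]} = Leaf" unfolding P_cut_def by (rule prune_root)
  show ?thesis
    unfolding Dcut_def AC_def using assms nm finite_adm[of t]
    by (simp add: G P add.commute)
qed

lemma Delta_Dcut: "Delta t = Dcut t"
proof (cases "t = Leaf")
  case True
  have "\<And>C. admissible_cut Leaf C \<longleftrightarrow> C = {}"
  proof -
    have "internal_edges Leaf = {}"
      unfolding internal_edges_def by (auto elim: valid_pos.elims)
    then show "\<And>C. admissible_cut Leaf C \<longleftrightarrow> C = {}" unfolding admissible_cut_def by auto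
  qed
  then have A: "AC Leaf = {{}}" unfolding AC_def by auto
  have c: "cutoffs {} [] Leaf = []" by (subst cutoffs.simps) simp
  have p: "prune {} [] Leaf = Leaf" by (subst prune.simps) simp
  show ?thesis unfolding True Dcut_def A Delta_def G_cut_def P_cut_def c p by (simp del: cutoffs.simps prune.simps add: c p)
next
  case False
  then show ?thesis unfolding Delta_def by (simp add: Dcut_nonleaf)
qed

definition BB :: "(tree \<times> tree \<Rightarrow>\<^sub>0 'k::comm_semiring_1) \<Rightarrow> (tree \<times> tree \<Rightarrow>\<^sub>0 'k) \<Rightarrow> (tree \<times> tree \<Rightarrow>\<^sub>0 'k)" where
  "BB D1 D2 = lin (\<lambda>p. lin (\<lambda>q. tens (star_t (fst p) (fst q)) (vec (Node [snd p, snd q]))) D2) D1"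

lemma DLR_Node2: "DLR (Node [t1, t2]) = BB (DLR t1) (DLR t2) + tens (vec (Node [t1, t2])) (vec Leaf)"
  by (simp add: BB_def lin_def scale_sum split_def Star_vec_vec)

lemma BB_sum_left: "BB (\<Sum>i\<in>I. u i) v = (\<Sum>i\<in>I. BB (u i) v)"
  unfolding BB_def by (rule lin_sum)

lemma BB_sum_right: "BB u (\<Sum>i\<in>I. v i) = (\<Sum>i\<in>I. BB u (v i))"
  unfolding BB_def lin_sum by (rule lin_fun_sum)

lemma lin_tens_vec: "lin F (tens A (vec s)) = lin (\<lambda>x. F (x, s)) A"
  by (simp add: tens_lin lin_lin vec_bas)

lemma tens_Star: "tens (Star A B) V = lin (\<lambda>x. lin (\<lambda>z. tens (star_t x z) V) B) A"
  by (simp add: tens_lin Star_lin lin_lin)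

lemma BB_tens: "BB (tens A (vec s)) (tens B (vec r)) = tens (Star A B) (vec (Node [s, r]))"
  unfolding BB_def tens_Star lin_tens_vec by simp

lemma Dcut_Node2:
  assumes b1: "binary_tree t1" and b2: "binary_tree t2"
  shows "(Dcut (Node [t1, t2]) :: tree \<times> tree \<Rightarrow>\<^sub>0 'k::comm_semiring_1)
    = (\<Sum>C1\<in>AC t1. \<Sum>C2\<in>AC t2. tens (Star (G_cut t1 C1) (G_cut t2 C2)) (vec (Node [P_cut t1 C1, P_cut t2 C2])))
      + tens (vec (Node [t1, t2])) (vec Leaf)"
proof -
  let ?t = "Node [t1, t2]"
  let ?g = "\<lambda>(C1, C2). (tens (Star (G_cut t1 C1) (G_cut t2 C2)) (vec (Node [P_cut t1 C1, P_cut t2 C2])) :: tree \<times> tree \<Rightarrow>\<^sub>0 'k)"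
  have bl: "list_all binary_tree [t1, t2]" using b1 b2 by simp
  have "(\<Sum>C\<in>{C. admissible_cut ?t C}. (tens (G_cut ?t C) (vec (P_cut ?t C)) :: tree \<times> tree \<Rightarrow>\<^sub>0 'k))
      = (\<Sum>x\<in>AC t1 \<times> AC t2. ?g x)"
  proof (rule sum.reindex_bij_witness[where i = "\<lambda>(C1, C2). sh 0 C1 \<union> sh 1 C2" and j = "\<lambda>C. (dn 0 C, dn 1 C)"])
    fix C assume "C \<in> {C. admissible_cut ?t C}"
    then have adm: "admissible_cut ?t C" by simp
    show "(case (dn 0 C, dn 1 C) of (C1, C2) \<Rightarrow> sh 0 C1 \<union> sh 1 C2) = C"
      using sh_dn[OF adm] by simp
    show "(dn 0 C, dn 1 C) \<in> AC t1 \<times> AC t2"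
      using adm_dn[OF bl _ adm, of 0] adm_dn[OF bl _ adm, of 1] by simp
    have nil: "[] \<notin> C" by (rule adm_nil[OF adm])
    show "?g (dn 0 C, dn 1 C) = tens (G_cut ?t C) (vec (P_cut ?t C))"
      by (simp add: G_cut_Node2[OF nil] P_cut_Node2[OF nil])
  next
    fix x assume x: "x \<in> AC t1 \<times> AC t2"
    obtain C1 C2 where xc: "x = (C1, C2)" by (cases x)
    show "(dn 0 (case x of (C1, C2) \<Rightarrow> sh 0 C1 \<union> sh 1 C2), dn 1 (case x of (C1, C2) \<Rightarrow> sh 0 C1 \<union> sh 1 C2)) = x"
      by (simp only: xc prod.case dn_sh0 dn_sh1)
    show "(case x of (C1, C2) \<Rightarrow> sh 0 C1 \<union> sh 1 C2) \<in> {C. admissible_cut ?t C}"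
      using xc x adm_sh by auto
  qed
  also have "\<dots> = (\<Sum>C1\<in>AC t1. \<Sum>C2\<in>AC t2. tens (Star (G_cut t1 C1) (G_cut t2 C2)) (vec (Node [P_cut t1 C1, P_cut t2 C2])))"
    by (simp add: sum.cartesian_product)
  finally show ?thesis by (simp add: Dcut_nonleaf)
qed

lemma Delta_DLR: "binary_tree t \<Longrightarrow> (Delta t :: tree \<times> tree \<Rightarrow>\<^sub>0 'k::comm_semiring_1) = DLR t"
proof (induction t)
  case Leaf
  then show ?case by (simp add: Delta_def)
next
  case (Node ts)
  obtain t1 t2 where ts: "ts = [t1, t2]" using Node.prems
    by (auto simp: numeral_2_eq_2 length_Suc_conv)
  have b1: "binary_tree t1" and b2: "binary_tree t2" using Node.prems ts by auto
  have i1: "(Delta t1 :: tree \<times> tree \<Rightarrow>\<^sub>0 'k) = DLR t1" using Node.IH b1 ts by simp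
  have i2: "(Delta t2 :: tree \<times> tree \<Rightarrow>\<^sub>0 'k) = DLR t2" using Node.IH b2 ts by simp
  have "(DLR (Node [t1, t2]) :: tree \<times> tree \<Rightarrow>\<^sub>0 'k) = BB (Dcut t1) (Dcut t2) + tens (vec (Node [t1, t2])) (vec Leaf)"
    unfolding DLR_Node2 i1[symmetric] i2[symmetric] Delta_Dcut ..
  also have "\<dots> = Delta (Node [t1, t2])"
    unfolding Delta_Dcut Dcut_Node2[OF b1 b2]
    by (simp add: Dcut_def BB_sum_left BB_sum_right BB_tens) (subst sum.swap, simp)
  finally show ?case unfolding ts ..
qed


theorem mainTheorem19:
  fixes t :: tree
  assumes "binary_tree t"
  shows "(Delta t :: tree \<times> tree \<Rightarrow>\<^sub>0 'k::field) - DLR t \<in> tensor_ideal"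
proof -
  have "(Delta t :: tree \<times> tree \<Rightarrow>\<^sub>0 'k) = DLR t" by (rule Delta_DLR[OF assms])
  then show ?thesis by (simp add: tensor_ideal.zero)
qed

end
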